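(* Let $0<b<1$, $K_3>0$, and let $\Omega=\{(r,\phi): b\le r\le 1,\ 0\le \phi<2\pi\}$ be the annulus in planar polar coordinates. For $\delta\le 1$ and a radial perturbation $\eta=\eta(r)\in C^1([b,1])$, define the second variation of the Oseen–Frank energy about the defect-free state by $$\delta^2E(\eta,\delta)=K_3\iint_\Omega \Big(|\nabla\eta|^2-\delta\Big(\frac{\eta}{r}+\eta_r\Big)^2\Big)\,d\Omega = 2\pi K_3\int_b^1\Big(\eta_r^2-\delta\Big(\frac{\eta}{r}+\eta_r\Big)^2\Big)\,r\,dr.$$ Then for every admissible $\eta$, i.e. every $\eta\in C^1([b,1])$ with $\eta(b)=\eta(1)=0$ and $\eta\not\equiv 0$, there exists $\delta_\eta<1$ such that $\delta^2E(\eta,\delta)<0$ for all $\delta$ with $\delta_\eta<\delta\le 1$.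
   Context: This is the second variation of the two-dimensional Oseen–Frank energy $E[\theta]=\iint_\Omega \frac{K_1}{2}(\nabla\cdot\mathbf n)^2+\frac{K_3}{2}(\mathbf n\times(\nabla\times\mathbf n))^2\,d\Omega$, $\mathbf n=(\cos\theta,\sin\theta,0)$, about the defect-free state $\theta^*=\phi+\pi/2$, with Dirichlet (strong tangent) boundary conditions on $r=b$ and $r=1$ (so perturbations vanish there). The elastic anisotropy is $\delta=1-K_1/K_3$ with $K_1\ge 0$, $K_3>0$. *)

theory Defs
  imports "HOL-Analysis.Analysis"
begin

definition C1_on :: "real \<Rightarrow> real \<Rightarrow> (real \<Rightarrow> real) \<Rightarrow> (real \<Rightarrow> real) \<Rightarrow> bool" where
  "C1_on a c eta eta' \<longleftrightarrow>
     (\<forall>x\<in>{a..c}. (eta has_real_derivative eta' x) (at x within {a..c}))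
     \<and> continuous_on {a..c} eta'"

definition second_variation ::
  "real \<Rightarrow> real \<Rightarrow> (real \<Rightarrow> real) \<Rightarrow> (real \<Rightarrow> real) \<Rightarrow> real \<Rightarrow> real" where
  "second_variation K3 b eta eta' \<delta> =
     2 * pi * K3 * integral {b..1}
       (\<lambda>r. ((eta' r)\<^sup>2 - \<delta> * (eta r / r + eta' r)\<^sup>2) * r)"

end

theory Submission
  imports Defs
begin

theorem proposition1:
  fixes b K3 :: real and eta eta' :: "real \<Rightarrow> real"
  assumes "0 < b" "b < 1" "0 < K3"
    and "C1_on b 1 eta eta'"
    and "eta b = 0" "eta 1 = 0"
    and "\<exists>r\<in>{b..1}. eta r \<noteq> 0"
  shows "\<exists>\<delta>\<eta> < 1. \<forall>\<delta>. \<delta>\<eta> < \<delta> \<and> \<delta> \<le> 1 \<longrightarrow> second_variation K3 b eta eta' \<delta> < 0"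
proof -
  have der: "\<And>x. x \<in> {b..1} \<Longrightarrow> (eta has_real_derivative eta' x) (at x within {b..1})"
    and ce': "continuous_on {b..1} eta'" using assms(4) unfolding C1_on_def by auto
  have ce: "continuous_on {b..1} eta"
    unfolding continuous_on_eq_continuous_within using der DERIV_continuous by blast
  have cid: "continuous_on {b..1} (\<lambda>r::real. r)" by (intro continuous_intros)
  have nz: "\<And>r. r \<in> {b..1} \<Longrightarrow> r \<noteq> 0" using assms(1) by auto
  define f where "f = (\<lambda>r. (eta' r)\<^sup>2 * r)"
  define g where "g = (\<lambda>r. (eta r / r + eta' r)\<^sup>2 * r)"
  have cf: "continuous_on {b..1} f" unfolding f_def using ce' by (intro continuous_intros)
  have cg: "continuous_on {b..1} g" unfolding g_def using ce ce' nz
    by (intro continuous_intros) auto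
  have fi: "f integrable_on {b..1}" using cf integrable_continuous_interval by blast
  have gi: "g integrable_on {b..1}" using cg integrable_continuous_interval by blast
  define A where "A = integral {b..1} f"
  define B where "B = integral {b..1} g"
  have SV: "second_variation K3 b eta eta' d = 2 * pi * K3 * (A - d * B)" for d
  proof -
    have "integral {b..1} (\<lambda>r. ((eta' r)\<^sup>2 - d * (eta r / r + eta' r)\<^sup>2) * r)
        = integral {b..1} (\<lambda>r. f r - d * g r)"
      unfolding f_def g_def by (simp add: algebra_simps)
    also have "\<dots> = A - d * B" unfolding A_def B_def
      using integral_diff[OF fi integrable_on_cmult_left[OF gi, of d]] by simp
    finally show ?thesis unfolding second_variation_def by simp
  qed
  define h where "h = (\<lambda>r. (eta r)\<^sup>2 / r)"
  have fg: "\<And>r. r \<in> {b..1} \<Longrightarrow> f r - g r = - h r - 2 * eta r * eta' r"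
    unfolding f_def g_def h_def using nz by (simp add: power2_eq_square field_simps)
  have ftc: "((\<lambda>r. 2 * eta r * eta' r) has_integral ((eta 1)\<^sup>2 - (eta b)\<^sup>2)) {b..1}"
  proof (rule fundamental_theorem_of_calculus)
    show "b \<le> 1" using assms by simp
    fix x assume "x \<in> {b..1}"
    then have "((\<lambda>r. (eta r)\<^sup>2) has_real_derivative (2 * eta x * eta' x)) (at x within {b..1})"
      using der by (auto intro!: derivative_eq_intros)
    then show "((\<lambda>r. (eta r)\<^sup>2) has_vector_derivative (2 * eta x * eta' x)) (at x within {b..1})"
      by (simp add: has_real_derivative_iff_has_vector_derivative)
  qed
  have ch: "continuous_on {b..1} h" unfolding h_def using ce nz by (intro continuous_intros) auto
  have hi: "h integrable_on {b..1}" using ch integrable_continuous_interval by blast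
  have hnn: "\<And>x. x \<in> {b..1} \<Longrightarrow> h x \<ge> 0" unfolding h_def using assms(1) by auto
  obtain r0 where r0: "r0 \<in> {b..1}" "eta r0 \<noteq> 0" using assms(7) by auto
  have "h r0 \<noteq> 0" unfolding h_def using r0 nz by auto
  then have "integral {b..1} h \<noteq> 0"
    using integral_eq_0_iff[OF ch assms(2)[unfolded] ] hnn r0 assms(1,2)
    by (metis assms(2) integral_eq_0_iff[OF ch])
  moreover have "integral {b..1} h \<ge> 0" using hnn hi by (intro integral_nonneg) auto
  ultimately have hpos: "integral {b..1} h > 0" by simp
  have "A - B = integral {b..1} (\<lambda>r. f r - g r)" unfolding A_def B_def
    using fi gi by (simp add: integral_diff)
  also have "\<dots> = integral {b..1} (\<lambda>r. - h r - 2 * eta r * eta' r)"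
    using fg by (intro integral_cong) auto
  also have "\<dots> = - integral {b..1} h - 0"
  proof -
    have "((\<lambda>r. 2 * eta r * eta' r) has_integral 0) {b..1}" using ftc assms(5,6) by simp
    then have "((\<lambda>r. - h r - 2 * eta r * eta' r) has_integral (- integral {b..1} h - 0)) {b..1}"
      by (intro has_integral_diff has_integral_neg integrable_integral hi)
    then show ?thesis by (rule integral_unique)
  qed
  finally have AB: "A - B < 0" using hpos by simp
  have A0: "A \<ge> 0" unfolding A_def f_def using assms(1) by (intro integral_nonneg) (auto intro: fi[unfolded f_def])
  have Bpos: "B > 0" using AB A0 by simp
  show ?thesis
  proof (intro exI conjI allI impI)
    show "A / B < 1" using AB Bpos by (simp add: divide_less_eq)
    fix d assume d: "A / B < d \<and> d \<le> 1"
    then have "A < d * B" using Bpos by (simp add: divide_less_eq mult.commute)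
    then have "A - d * B < 0" by simp
    then show "second_variation K3 b eta eta' d < 0" unfolding SV
      using assms(3) by (simp add: mult_pos_neg)
  qed
qed

end
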